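(* If $\Gamma;\Delta\vdash t:\rho$ in $\lambda\mu\mathrm{T}$, then $t\in\mathrm{SN}_A$, i.e. there is no infinite $\to_A$-reduction sequence starting from $t$.
   Context: The calculus $\lambda\mu\mathrm{T}$. Types: $\rho,\sigma,\tau ::= \mathbb{N} \mid \sigma\to\tau$. Over infinite sets of $\lambda$-variables $x,y,\dots$ and $\mu$-variables $\alpha,\beta,\gamma,\dots$, terms and commands are mutually defined by $t,r,s ::= x \mid \lambda x{:}\rho.r \mid t\,s \mid \mu\alpha{:}\rho.c \mid 0 \mid \mathsf{S}\,t \mid \mathsf{nrec}_\rho\ r\ s\ t$ and $c ::= [\alpha]t$ (type annotations often omitted). Terms are considered modulo renaming of bound variables; $t[x:=r]$ is capture-avoiding substitution. Numerals: $\underline{n} := \mathsf{S}^n 0$. Contexts: $E ::= \Box \mid E\,t \mid \mathsf{S}\,E \mid \mathsf{nrec}\ r\ s\ E$; $E[u]$ is the result of filling the hole with $u$. Structural substitution $t[\alpha:=\beta E]$ is defined homomorphically on all constructs (capture-avoiding for both kinds of variables) except $([\alpha]u)[\alpha:=\beta E] := [\beta]E[u[\alpha:=\beta E]]$ (and $([\gamma]u)[\alpha:=\beta E]:=[\gamma](u[\alpha:=\beta E])$ for $\gamma\neq\alpha$). Typing judgments $\Gamma;\Delta\vdash t:\rho$ and $\Gamma;\Delta\vdash c$ are generated by: (var) $x:\rho\in\Gamma \Rightarrow \Gamma;\Delta\vdash x:\rho$; (lambda) $\Gamma,x:\sigma;\Delta\vdash t:\tau \Rightarrow \Gamma;\Delta\vdash\lambda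 x{:}\sigma.t:\sigma\to\tau$; (app) $\Gamma;\Delta\vdash t:\sigma\to\tau$, $\Gamma;\Delta\vdash s:\sigma$ $\Rightarrow \Gamma;\Delta\vdash ts:\tau$; (zero) $\Gamma;\Delta\vdash 0:\mathbb{N}$; (suc) $\Gamma;\Delta\vdash t:\mathbb{N}\Rightarrow\Gamma;\Delta\vdash \mathsf{S}\,t:\mathbb{N}$; (nrec) $\Gamma;\Delta\vdash r:\rho$, $\Gamma;\Delta\vdash s:\mathbb{N}\to\rho\to\rho$, $\Gamma;\Delta\vdash t:\mathbb{N}$ $\Rightarrow \Gamma;\Delta\vdash\mathsf{nrec}_\rho\ r\ s\ t:\rho$; (activate) $\Gamma;\Delta,\alpha:\rho\vdash c\Rightarrow\Gamma;\Delta\vdash\mu\alpha{:}\rho.c:\rho$; (passivate) $\Gamma;\Delta\vdash t:\rho$, $\alpha:\rho\in\Delta$ $\Rightarrow \Gamma;\Delta\vdash[\alpha]t$. $\to_A$ is the compatible closure (on terms and commands) of the rules: $(\lambda x.t)r\to t[x:=r]$; $\mathsf{S}(\mu\alpha.c)\to\mu\alpha.c[\alpha:=\alpha(\mathsf{S}\,\Box)]$; $(\mu\alpha.c)s\to\mu\alpha.c[\alpha:=\alpha(\Box\,s)]$; $\mathsf{nrec}\ r\ s\ 0\to r$; $\mathsf{nrec}\ r\ s\ (\mathsf{S}\,\underline{n})\to s\ \underline{n}\ (\mathsf{nrec}\ r\ s\ \underline{n})$; $\mathsf{nrec}\ r\ s\ (\mu\alpha.c)\to\mu\alpha.c[\alpha:=\alpha(\mathsf{nrec}\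 r\ s\ \Box)]$. $\mathrm{SN}_A$ is the set of terms inductively defined by: $t\in\mathrm{SN}_A$ whenever every $t'$ with $t\to_A t'$ is in $\mathrm{SN}_A$. *)

theory Defs
  imports Main
begin

text \<open>The calculus lambda-mu-T, with de Bruijn indices for both kinds of variables
  (lambda-variables and mu-variables live in separate index spaces).
  This realises terms modulo renaming of bound variables.\<close>

datatype ty = Nat | Arr ty ty

datatype trm =
    TVar nat
  | TLam ty trm
  | TApp trm trm
  | TMu ty cmd
  | TZero
  | TSucc trm
  | TNrec ty trm trm trm
and cmd = Pass nat trm

primrec numeral_t :: "nat \<Rightarrow> trm" where
  "numeral_t 0 = TZero"
| "numeral_t (Suc n) = TSucc (numeral_t n)"

primrec liftL :: "nat \<Rightarrow> trm \<Rightarrow> trm" and liftLc :: "nat \<Rightarrow> cmd \<Rightarrow> cmd" where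
  "liftL k (TVar i) = (if i < k then TVar i else TVar (Suc i))"
| "liftL k (TLam \<sigma> t) = TLam \<sigma> (liftL (Suc k) t)"
| "liftL k (TApp t s) = TApp (liftL k t) (liftL k s)"
| "liftL k (TMu \<rho> c) = TMu \<rho> (liftLc k c)"
| "liftL k TZero = TZero"
| "liftL k (TSucc t) = TSucc (liftL k t)"
| "liftL k (TNrec \<rho> r s t) = TNrec \<rho> (liftL k r) (liftL k s) (liftL k t)"
| "liftLc k (Pass \<alpha> t) = Pass \<alpha> (liftL k t)"

primrec liftM :: "nat \<Rightarrow> trm \<Rightarrow> trm" and liftMc :: "nat \<Rightarrow> cmd \<Rightarrow> cmd" where
  "liftM k (TVar i) = TVar i"
| "liftM k (TLam \<sigma> t) = TLam \<sigma> (liftM k t)"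
| "liftM k (TApp t s) = TApp (liftM k t) (liftM k s)"
| "liftM k (TMu \<rho> c) = TMu \<rho> (liftMc (Suc k) c)"
| "liftM k TZero = TZero"
| "liftM k (TSucc t) = TSucc (liftM k t)"
| "liftM k (TNrec \<rho> r s t) = TNrec \<rho> (liftM k r) (liftM k s) (liftM k t)"
| "liftMc k (Pass \<alpha> t) = Pass (if \<alpha> < k then \<alpha> else Suc \<alpha>) (liftM k t)"

text \<open>Capture-avoiding substitution of s for lambda-variable k
  (free indices above k are decremented, as the binder disappears).\<close>
primrec substL :: "trm \<Rightarrow> nat \<Rightarrow> trm \<Rightarrow> trm" and substLc :: "cmd \<Rightarrow> nat \<Rightarrow> trm \<Rightarrow> cmd" where
  "substL (TVar i) k s = (if i < k then TVar i else if i = k then s else TVar (i - 1))"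
| "substL (TLam \<sigma> t) k s = TLam \<sigma> (substL t (Suc k) (liftL 0 s))"
| "substL (TApp t u) k s = TApp (substL t k s) (substL u k s)"
| "substL (TMu \<rho> c) k s = TMu \<rho> (substLc c k (liftM 0 s))"
| "substL TZero k s = TZero"
| "substL (TSucc t) k s = TSucc (substL t k s)"
| "substL (TNrec \<rho> r u t) k s = TNrec \<rho> (substL r k s) (substL u k s) (substL t k s)"
| "substLc (Pass \<alpha> t) k s = Pass \<alpha> (substL t k s)"

datatype ectx = Hole | EApp ectx trm | ESucc ectx | ENrec ty trm trm ectx

primrec fill :: "ectx \<Rightarrow> trm \<Rightarrow> trm" where
  "fill Hole u = u"
| "fill (EApp E t) u = TApp (fill E u) t"
| "fill (ESucc E) u = TSucc (fill E u)"
| "fill (ENrec \<rho> r s E) u = TNrec \<rho> r s (fill E u)"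

primrec liftLE :: "nat \<Rightarrow> ectx \<Rightarrow> ectx" where
  "liftLE k Hole = Hole"
| "liftLE k (EApp E t) = EApp (liftLE k E) (liftL k t)"
| "liftLE k (ESucc E) = ESucc (liftLE k E)"
| "liftLE k (ENrec \<rho> r s E) = ENrec \<rho> (liftL k r) (liftL k s) (liftLE k E)"

primrec liftME :: "nat \<Rightarrow> ectx \<Rightarrow> ectx" where
  "liftME k Hole = Hole"
| "liftME k (EApp E t) = EApp (liftME k E) (liftM k t)"
| "liftME k (ESucc E) = ESucc (liftME k E)"
| "liftME k (ENrec \<rho> r s E) = ENrec \<rho> (liftM k r) (liftM k s) (liftME k E)"

text \<open>Structural substitution t[alpha := alpha E]: every command [alpha]u
  becomes [alpha] E[u[alpha := alpha E]].\<close>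
primrec sst :: "nat \<Rightarrow> ectx \<Rightarrow> trm \<Rightarrow> trm" and sstc :: "nat \<Rightarrow> ectx \<Rightarrow> cmd \<Rightarrow> cmd" where
  "sst a E (TVar i) = TVar i"
| "sst a E (TLam \<sigma> t) = TLam \<sigma> (sst a (liftLE 0 E) t)"
| "sst a E (TApp t u) = TApp (sst a E t) (sst a E u)"
| "sst a E (TMu \<rho> c) = TMu \<rho> (sstc (Suc a) (liftME 0 E) c)"
| "sst a E TZero = TZero"
| "sst a E (TSucc t) = TSucc (sst a E t)"
| "sst a E (TNrec \<rho> r u t) = TNrec \<rho> (sst a E r) (sst a E u) (sst a E t)"
| "sstc a E (Pass \<beta> u) =
     (if \<beta> = a then Pass a (fill E (sst a E u)) else Pass \<beta> (sst a E u))"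

inductive hastype :: "ty list \<Rightarrow> ty list \<Rightarrow> trm \<Rightarrow> ty \<Rightarrow> bool"
  and hastypec :: "ty list \<Rightarrow> ty list \<Rightarrow> cmd \<Rightarrow> bool" where
  t_var: "x < length \<Gamma> \<Longrightarrow> \<Gamma> ! x = \<rho> \<Longrightarrow> hastype \<Gamma> \<Delta> (TVar x) \<rho>"
| t_lam: "hastype (\<sigma> # \<Gamma>) \<Delta> t \<tau> \<Longrightarrow> hastype \<Gamma> \<Delta> (TLam \<sigma> t) (Arr \<sigma> \<tau>)"
| t_app: "hastype \<Gamma> \<Delta> t (Arr \<sigma> \<tau>) \<Longrightarrow> hastype \<Gamma> \<Delta> s \<sigma> \<Longrightarrow> hastype \<Gamma> \<Delta> (TApp t s) \<tau>"
| t_zero: "hastype \<Gamma> \<Delta> TZero Nat"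
| t_suc: "hastype \<Gamma> \<Delta> t Nat \<Longrightarrow> hastype \<Gamma> \<Delta> (TSucc t) Nat"
| t_nrec: "hastype \<Gamma> \<Delta> r \<rho> \<Longrightarrow> hastype \<Gamma> \<Delta> s (Arr Nat (Arr \<rho> \<rho>)) \<Longrightarrow> hastype \<Gamma> \<Delta> t Nat
           \<Longrightarrow> hastype \<Gamma> \<Delta> (TNrec \<rho> r s t) \<rho>"
| t_act: "hastypec \<Gamma> (\<rho> # \<Delta>) c \<Longrightarrow> hastype \<Gamma> \<Delta> (TMu \<rho> c) \<rho>"
| t_pass: "hastype \<Gamma> \<Delta> t \<rho> \<Longrightarrow> \<alpha> < length \<Delta> \<Longrightarrow> \<Delta> ! \<alpha> = \<rho> \<Longrightarrow> hastypec \<Gamma> \<Delta> (Pass \<alpha> t)"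

inductive red :: "trm \<Rightarrow> trm \<Rightarrow> bool" and redc :: "cmd \<Rightarrow> cmd \<Rightarrow> bool" where
  r_beta: "red (TApp (TLam \<sigma> t) r) (substL t 0 r)"
| r_suc_mu: "red (TSucc (TMu \<rho> c)) (TMu \<rho> (sstc 0 (ESucc Hole) c))"
| r_app_mu: "red (TApp (TMu (Arr \<sigma> \<tau>) c) s) (TMu \<tau> (sstc 0 (EApp Hole (liftM 0 s)) c))"
| r_nrec_0: "red (TNrec \<rho> r s TZero) r"
| r_nrec_S: "red (TNrec \<rho> r s (TSucc (numeral_t n)))
               (TApp (TApp s (numeral_t n)) (TNrec \<rho> r s (numeral_t n)))"
| r_nrec_mu: "red (TNrec \<rho> r s (TMu \<sigma> c))
               (TMu \<rho> (sstc 0 (ENrec \<rho> (liftM 0 r) (liftM 0 s) Hole) c))"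
| c_lam: "red t t' \<Longrightarrow> red (TLam \<sigma> t) (TLam \<sigma> t')"
| c_app1: "red t t' \<Longrightarrow> red (TApp t s) (TApp t' s)"
| c_app2: "red s s' \<Longrightarrow> red (TApp t s) (TApp t s')"
| c_mu: "redc c c' \<Longrightarrow> red (TMu \<rho> c) (TMu \<rho> c')"
| c_suc: "red t t' \<Longrightarrow> red (TSucc t) (TSucc t')"
| c_nrec1: "red r r' \<Longrightarrow> red (TNrec \<rho> r s t) (TNrec \<rho> r' s t)"
| c_nrec2: "red s s' \<Longrightarrow> red (TNrec \<rho> r s t) (TNrec \<rho> r s' t)"
| c_nrec3: "red t t' \<Longrightarrow> red (TNrec \<rho> r s t) (TNrec \<rho> r s t')"
| c_pass: "red t t' \<Longrightarrow> redc (Pass \<alpha> t) (Pass \<alpha> t')"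

inductive SNA :: "trm \<Rightarrow> bool" where
  SNA_intro: "(\<And>t'. red t t' \<Longrightarrow> SNA t') \<Longrightarrow> SNA t"

end

theory Submission
  imports Defs
begin


primrec ecomp :: "ectx \<Rightarrow> ectx \<Rightarrow> ectx" where
  "ecomp Hole F = F"
| "ecomp (EApp E t) F = EApp (ecomp E F) t"
| "ecomp (ESucc E) F = ESucc (ecomp E F)"
| "ecomp (ENrec \<rho> r s E) F = ENrec \<rho> r s (ecomp E F)"

primrec elen :: "ectx \<Rightarrow> nat" where
  "elen Hole = 0"
| "elen (EApp E t) = Suc (elen E)"
| "elen (ESucc E) = Suc (elen E)"
| "elen (ENrec \<rho> r s E) = Suc (elen E)"

lemma fill_ecomp[simp]: "fill (ecomp E F) u = fill E (fill F u)"
  by (induction E) auto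
lemma ecomp_Hole[simp]: "ecomp E Hole = E"
  by (induction E) auto
lemma elen_ecomp[simp]: "elen (ecomp E F) = elen E + elen F"
  by (induction E) auto

definition upL :: "(nat \<Rightarrow> trm) \<Rightarrow> nat \<Rightarrow> trm" where
  "upL \<sigma> i = (case i of 0 \<Rightarrow> TVar 0 | Suc j \<Rightarrow> liftL 0 (\<sigma> j))"
definition upg :: "(nat \<Rightarrow> nat) \<Rightarrow> nat \<Rightarrow> nat" where
  "upg g i = (case i of 0 \<Rightarrow> 0 | Suc j \<Rightarrow> Suc (g j))"
definition upE :: "(nat \<Rightarrow> ectx) \<Rightarrow> nat \<Rightarrow> ectx" where
  "upE \<tau> i = (case i of 0 \<Rightarrow> Hole | Suc j \<Rightarrow> liftME 0 (\<tau> j))"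

lemma upL_simps[simp]: "upL \<sigma> 0 = TVar 0" "upL \<sigma> (Suc j) = liftL 0 (\<sigma> j)"
  by (auto simp: upL_def)
lemma upg_simps[simp]: "upg g 0 = 0" "upg g (Suc j) = Suc (g j)"
  by (auto simp: upg_def)
lemma upE_simps[simp]: "upE \<tau> 0 = Hole" "upE \<tau> (Suc j) = liftME 0 (\<tau> j)"
  by (auto simp: upE_def)

primrec ps :: "(nat \<Rightarrow> trm) \<Rightarrow> (nat \<Rightarrow> nat) \<Rightarrow> (nat \<Rightarrow> ectx) \<Rightarrow> trm \<Rightarrow> trm"
  and psc :: "(nat \<Rightarrow> trm) \<Rightarrow> (nat \<Rightarrow> nat) \<Rightarrow> (nat \<Rightarrow> ectx) \<Rightarrow> cmd \<Rightarrow> cmd" where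
  "ps \<sigma> g \<tau> (TVar i) = \<sigma> i"
| "ps \<sigma> g \<tau> (TLam ty t) = TLam ty (ps (upL \<sigma>) g (\<lambda>b. liftLE 0 (\<tau> b)) t)"
| "ps \<sigma> g \<tau> (TApp t u) = TApp (ps \<sigma> g \<tau> t) (ps \<sigma> g \<tau> u)"
| "ps \<sigma> g \<tau> (TMu ty c) = TMu ty (psc (\<lambda>i. liftM 0 (\<sigma> i)) (upg g) (upE \<tau>) c)"
| "ps \<sigma> g \<tau> TZero = TZero"
| "ps \<sigma> g \<tau> (TSucc t) = TSucc (ps \<sigma> g \<tau> t)"
| "ps \<sigma> g \<tau> (TNrec ty r u t) = TNrec ty (ps \<sigma> g \<tau> r) (ps \<sigma> g \<tau> u) (ps \<sigma> g \<tau> t)"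
| "psc \<sigma> g \<tau> (Pass b u) = Pass (g b) (fill (\<tau> b) (ps \<sigma> g \<tau> u))"

primrec psE :: "(nat \<Rightarrow> trm) \<Rightarrow> (nat \<Rightarrow> nat) \<Rightarrow> (nat \<Rightarrow> ectx) \<Rightarrow> ectx \<Rightarrow> ectx" where
  "psE \<sigma> g \<tau> Hole = Hole"
| "psE \<sigma> g \<tau> (EApp E t) = EApp (psE \<sigma> g \<tau> E) (ps \<sigma> g \<tau> t)"
| "psE \<sigma> g \<tau> (ESucc E) = ESucc (psE \<sigma> g \<tau> E)"
| "psE \<sigma> g \<tau> (ENrec \<rho> r s E) = ENrec \<rho> (ps \<sigma> g \<tau> r) (ps \<sigma> g \<tau> s) (psE \<sigma> g \<tau> E)"

lemma ps_fill[simp]: "ps \<sigma> g \<tau> (fill E u) = fill (psE \<sigma> g \<tau> E) (ps \<sigma> g \<tau> u)"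
  by (induction E) auto

definition shL :: "nat \<Rightarrow> nat \<Rightarrow> trm" where "shL k i = TVar (if i < k then i else Suc i)"
definition shg :: "nat \<Rightarrow> nat \<Rightarrow> nat" where "shg k b = (if b < k then b else Suc b)"
definition sfL :: "nat \<Rightarrow> trm \<Rightarrow> nat \<Rightarrow> trm" where
  "sfL k s i = (if i < k then TVar i else if i = k then s else TVar (i - 1))"
definition sfM :: "nat \<Rightarrow> ectx \<Rightarrow> nat \<Rightarrow> ectx" where "sfM a E b = (if b = a then E else Hole)"
abbreviation hole :: "nat \<Rightarrow> ectx" where "hole \<equiv> (\<lambda>_. Hole)"

lemma upL_shL[simp]: "upL (shL k) = shL (Suc k)"
  by (rule ext) (auto simp: shL_def upL_def upg_def upE_def split: nat.split)
lemma liftM_shL[simp]: "(\<lambda>i. liftM 0 (shL k i)) = shL k"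
  by (rule ext) (auto simp: shL_def)
lemma upL_TVar[simp]: "upL TVar = TVar"
  by (rule ext) (simp add: upE_def upL_def split: nat.split)
lemma liftM_TVar[simp]: "(\<lambda>i. liftM k (TVar i)) = TVar"
  by (rule ext) auto
lemma upg_id[simp]: "upg id = id" "upg (\<lambda>x. x) = (\<lambda>x::nat. x)"
  by (rule ext, simp add: upg_def split: nat.split)+
lemma upE_hole[simp]: "upE hole = hole"
  by (rule ext) (simp add: upE_def upL_def split: nat.split)
lemma upg_shg[simp]: "upg (shg k) = shg (Suc k)"
  by (rule ext) (auto simp: shg_def upL_def upg_def upE_def split: nat.split)
lemma upL_sfL[simp]: "upL (sfL k s) = sfL (Suc k) (liftL 0 s)"
  by (rule ext) (auto simp: sfL_def upL_def upg_def upE_def split: nat.split)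
lemma liftM_sfL[simp]: "(\<lambda>i. liftM 0 (sfL k s i)) = sfL k (liftM 0 s)"
  by (rule ext) (auto simp: sfL_def)
lemma upE_sfM[simp]: "upE (sfM a E) = sfM (Suc a) (liftME 0 E)"
  by (rule ext) (auto simp: sfM_def upL_def upg_def upE_def split: nat.split)
lemma liftLE_sfM[simp]: "(\<lambda>b. liftLE 0 (sfM a E b)) = sfM a (liftLE 0 E)"
  by (rule ext) (auto simp: sfM_def)

lemma fill_Hole_fun[simp]: "fill Hole u = u" by simp

lemma liftL_TVar_shL: "liftL k (TVar i) = shL k i" by (simp add: shL_def)
lemma substL_TVar_sfL: "substL (TVar i) k s = sfL k s i" by (simp add: sfL_def)
lemma sfM_simps[simp]: "sfM a E a = E" "b \<noteq> a \<Longrightarrow> sfM a E b = Hole" by (auto simp: sfM_def)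
lemma shg_simp: "(if b < k then b else Suc b) = shg k b" by (simp add: shg_def)

lemma liftL_ps: "liftL k t = ps (shL k) id hole t" and liftL_ps_c: "liftLc k c = psc (shL k) id hole c"
proof (induction t and c arbitrary: k and k)
  case (TVar x) then show ?case by (simp add: shL_def)
qed auto
lemma liftM_ps: "liftM k t = ps TVar (shg k) hole t" and liftM_ps_c: "liftMc k c = psc TVar (shg k) hole c"
  by (induction t and c arbitrary: k and k) (auto simp: shg_simp)
lemma substL_ps: "substL t k s = ps (sfL k s) id hole t" and substL_ps_c: "substLc c k s = psc (sfL k s) id hole c"
proof (induction t and c arbitrary: k s and k s)
  case (TVar x) then show ?case by (simp add: sfL_def)
qed auto
lemma sst_ps: "sst a E t = ps TVar id (sfM a E) t" and sst_ps_c: "sstc a E c = psc TVar id (sfM a E) c"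
  by (induction t and c arbitrary: a E and a E) auto

lemma ps_id: "ps TVar id hole t = t" and ps_id_c: "psc TVar id hole c = c"
  by (induction t and c) auto



lemma upL_shg: "(\<lambda>i. upL \<sigma> (shg (Suc k) i)) = upL (\<lambda>i. \<sigma> (shg k i))"
  by (rule ext) (auto simp: upL_def shg_def split: nat.split)
lemma upg_shg2: "(\<lambda>i. upg g (shg (Suc k) i)) = upg (\<lambda>i. g (shg k i))"
  by (rule ext) (auto simp: upg_def shg_def split: nat.split)
lemma upE_shg: "(\<lambda>i. upE \<tau> (shg (Suc k) i)) = upE (\<lambda>i. \<tau> (shg k i))"
  by (rule ext) (auto simp: upE_def shg_def split: nat.split)

lemma ps_liftL: "ps \<sigma> g \<tau> (liftL k t) = ps (\<lambda>i. \<sigma> (shg k i)) g \<tau> t"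
  and ps_liftL_c: "psc \<sigma> g \<tau> (liftLc k c) = psc (\<lambda>i. \<sigma> (shg k i)) g \<tau> c"
proof (induction t and c arbitrary: \<sigma> g \<tau> k and \<sigma> g \<tau> k)
  case (TVar x) then show ?case by (simp add: shg_def)
next
  case (TLam x1 t) then show ?case by (simp add: upL_shg)
qed auto

lemma ps_liftM: "ps \<sigma> g \<tau> (liftM k t) = ps \<sigma> (\<lambda>i. g (shg k i)) (\<lambda>i. \<tau> (shg k i)) t"
  and ps_liftM_c: "psc \<sigma> g \<tau> (liftMc k c) = psc \<sigma> (\<lambda>i. g (shg k i)) (\<lambda>i. \<tau> (shg k i)) c"
proof (induction t and c arbitrary: \<sigma> g \<tau> k and \<sigma> g \<tau> k)
  case (TMu x1 c) then show ?case by (simp add: upg_shg2 upE_shg)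
next
  case (Pass b u) then show ?case by (simp add: shg_def)
qed auto

lemma psE_liftLE: "psE \<sigma> g \<tau> (liftLE k E) = psE (\<lambda>i. \<sigma> (shg k i)) g \<tau> E"
  by (induction E) (auto simp: ps_liftL)
lemma psE_liftME: "psE \<sigma> g \<tau> (liftME k E) = psE \<sigma> (\<lambda>i. g (shg k i)) (\<lambda>i. \<tau> (shg k i)) E"
  by (induction E) (auto simp: ps_liftM)

lemma liftL_liftL: "j \<le> k \<Longrightarrow> liftL (Suc k) (liftL j t) = liftL j (liftL k t)"
  and liftL_liftL_c: "j \<le> k \<Longrightarrow> liftLc (Suc k) (liftLc j c) = liftLc j (liftLc k c)"
  by (induction t and c arbitrary: j k and j k) auto
lemma liftL_liftM: "liftL k (liftM j t) = liftM j (liftL k t)"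
  and liftL_liftM_c: "liftLc k (liftMc j c) = liftMc j (liftLc k c)"
  by (induction t and c arbitrary: j k and j k) auto
lemma liftM_liftM: "j \<le> k \<Longrightarrow> liftM (Suc k) (liftM j t) = liftM j (liftM k t)"
  and liftM_liftM_c: "j \<le> k \<Longrightarrow> liftMc (Suc k) (liftMc j c) = liftMc j (liftMc k c)"
  by (induction t and c arbitrary: j k and j k) auto

lemma liftLE_liftLE: "j \<le> k \<Longrightarrow> liftLE (Suc k) (liftLE j E) = liftLE j (liftLE k E)"
  by (induction E) (auto simp: liftL_liftL)
lemma liftLE_liftME: "liftLE k (liftME j E) = liftME j (liftLE k E)"
  by (induction E) (auto simp: liftL_liftM)
lemma liftME_liftME: "j \<le> k \<Longrightarrow> liftME (Suc k) (liftME j E) = liftME j (liftME k E)"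
  by (induction E) (auto simp: liftM_liftM)

lemma liftL_fill[simp]: "liftL k (fill E u) = fill (liftLE k E) (liftL k u)"
  by (induction E) auto
lemma liftM_fill[simp]: "liftM k (fill E u) = fill (liftME k E) (liftM k u)"
  by (induction E) auto
lemma liftLE_ecomp[simp]: "liftLE k (ecomp E F) = ecomp (liftLE k E) (liftLE k F)"
  by (induction E) auto
lemma liftME_ecomp[simp]: "liftME k (ecomp E F) = ecomp (liftME k E) (liftME k F)"
  by (induction E) auto

lemma liftL_upL: "(\<lambda>i. liftL (Suc k) (upL \<sigma> i)) = upL (\<lambda>i. liftL k (\<sigma> i))"
  by (rule ext) (auto simp: upL_def liftL_liftL split: nat.split)
lemma liftLE_upE: "(\<lambda>i. liftLE k (upE \<tau> i)) = upE (\<lambda>i. liftLE k (\<tau> i))"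
  by (rule ext) (auto simp: upE_def liftLE_liftME split: nat.split)
lemma liftM_upL: "(\<lambda>i. liftM k (upL \<sigma> i)) = upL (\<lambda>i. liftM k (\<sigma> i))"
  by (rule ext) (auto simp: upL_def liftL_liftM split: nat.split)
lemma liftME_upE: "(\<lambda>i. liftME (Suc k) (upE \<tau> i)) = upE (\<lambda>i. liftME k (\<tau> i))"
  by (rule ext) (auto simp: upE_def liftME_liftME split: nat.split)
lemma shg_upg: "(\<lambda>i. shg (Suc k) (upg g i)) = upg (\<lambda>i. shg k (g i))"
  by (rule ext) (auto simp: upg_def shg_def split: nat.split)

lemma liftL_psT: "liftL k (ps \<sigma> g \<tau> t) = ps (\<lambda>i. liftL k (\<sigma> i)) g (\<lambda>b. liftLE k (\<tau> b)) t"
  and liftL_psT_c: "liftLc k (psc \<sigma> g \<tau> c) = psc (\<lambda>i. liftL k (\<sigma> i)) g (\<lambda>b. liftLE k (\<tau> b)) c"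
proof (induction t and c arbitrary: \<sigma> g \<tau> k and \<sigma> g \<tau> k)
  case (TLam x1 t) then show ?case by (simp add: liftL_upL liftLE_liftLE)
next
  case (TMu x1 c) then show ?case by (simp add: liftL_liftM liftLE_upE)
qed auto

lemma liftM_psT: "liftM k (ps \<sigma> g \<tau> t) = ps (\<lambda>i. liftM k (\<sigma> i)) (\<lambda>b. shg k (g b)) (\<lambda>b. liftME k (\<tau> b)) t"
  and liftM_psT_c: "liftMc k (psc \<sigma> g \<tau> c) = psc (\<lambda>i. liftM k (\<sigma> i)) (\<lambda>b. shg k (g b)) (\<lambda>b. liftME k (\<tau> b)) c"
proof (induction t and c arbitrary: \<sigma> g \<tau> k and \<sigma> g \<tau> k)
  case (TLam x1 t) then show ?case by (simp add: liftM_upL liftLE_liftME)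
next
  case (TMu x1 c) then show ?case by (simp add: liftM_liftM liftME_upE shg_upg)
next
  case (Pass b u) then show ?case by (simp add: shg_def)
qed auto

lemma liftLE_psE: "liftLE k (psE \<sigma> g \<tau> E) = psE (\<lambda>i. liftL k (\<sigma> i)) g (\<lambda>b. liftLE k (\<tau> b)) E"
  by (induction E) (auto simp: liftL_psT)
lemma liftME_psE: "liftME k (psE \<sigma> g \<tau> E) = psE (\<lambda>i. liftM k (\<sigma> i)) (\<lambda>b. shg k (g b)) (\<lambda>b. liftME k (\<tau> b)) E"
  by (induction E) (auto simp: liftM_psT)

lemma upL_shg0: "(\<lambda>i. upL \<sigma> (shg 0 i)) = (\<lambda>i. liftL 0 (\<sigma> i))"
  by (rule ext) (auto simp: shg_def)
lemma upg_shg0: "(\<lambda>i. upg g (shg 0 i)) = (\<lambda>i. shg 0 (g i))"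
  by (rule ext) (auto simp: shg_def)
lemma upE_shg0: "(\<lambda>i. upE \<tau> (shg 0 i)) = (\<lambda>i. liftME 0 (\<tau> i))"
  by (rule ext) (auto simp: shg_def)

lemma E1: "ps (upL \<sigma>1) g1 (\<lambda>b. liftLE 0 (\<tau>1 b)) (liftL 0 u) = liftL 0 (ps \<sigma>1 g1 \<tau>1 u)"
  by (simp add: ps_liftL liftL_psT upL_shg0)
lemma E2: "psE (upL \<sigma>1) g1 (\<lambda>b. liftLE 0 (\<tau>1 b)) (liftLE 0 E) = liftLE 0 (psE \<sigma>1 g1 \<tau>1 E)"
  by (simp add: psE_liftLE liftLE_psE upL_shg0)
lemma E3: "ps (\<lambda>i. liftM 0 (\<sigma>1 i)) (upg g1) (upE \<tau>1) (liftM 0 u) = liftM 0 (ps \<sigma>1 g1 \<tau>1 u)"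
  by (simp add: ps_liftM liftM_psT upg_shg0 upE_shg0)
lemma E4: "psE (\<lambda>i. liftM 0 (\<sigma>1 i)) (upg g1) (upE \<tau>1) (liftME 0 E) = liftME 0 (psE \<sigma>1 g1 \<tau>1 E)"
  by (simp add: psE_liftME liftME_psE upg_shg0 upE_shg0)

lemma psE_ecomp[simp]: "psE \<sigma> g \<tau> (ecomp E F) = ecomp (psE \<sigma> g \<tau> E) (psE \<sigma> g \<tau> F)"
  by (induction E) auto

lemma comp_upL: "(\<lambda>i. ps (upL \<sigma>1) g1 (\<lambda>b. liftLE 0 (\<tau>1 b)) (upL \<sigma>2 i)) = upL (\<lambda>i. ps \<sigma>1 g1 \<tau>1 (\<sigma>2 i))"
  by (rule ext) (auto simp: upL_def E1 split: nat.split)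
lemma comp_upE: "(\<lambda>b. ecomp (upE \<tau>1 (upg g2 b)) (psE (\<lambda>i. liftM 0 (\<sigma>1 i)) (upg g1) (upE \<tau>1) (upE \<tau>2 b)))
   = upE (\<lambda>b. ecomp (\<tau>1 (g2 b)) (psE \<sigma>1 g1 \<tau>1 (\<tau>2 b)))"
  by (rule ext) (auto simp: upE_def E4 split: nat.split)
lemma comp_upg: "(\<lambda>b. upg g1 (upg g2 b)) = upg (\<lambda>b. g1 (g2 b))"
  by (rule ext) (auto simp: upg_def split: nat.split)

lemma ps_ps: "ps \<sigma>1 g1 \<tau>1 (ps \<sigma>2 g2 \<tau>2 t) = ps (\<lambda>i. ps \<sigma>1 g1 \<tau>1 (\<sigma>2 i)) (\<lambda>b. g1 (g2 b)) (\<lambda>b. ecomp (\<tau>1 (g2 b)) (psE \<sigma>1 g1 \<tau>1 (\<tau>2 b))) t"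
  and ps_ps_c: "psc \<sigma>1 g1 \<tau>1 (psc \<sigma>2 g2 \<tau>2 c) = psc (\<lambda>i. ps \<sigma>1 g1 \<tau>1 (\<sigma>2 i)) (\<lambda>b. g1 (g2 b)) (\<lambda>b. ecomp (\<tau>1 (g2 b)) (psE \<sigma>1 g1 \<tau>1 (\<tau>2 b))) c"
proof (induction t and c arbitrary: \<sigma>1 g1 \<tau>1 \<sigma>2 g2 \<tau>2 and \<sigma>1 g1 \<tau>1 \<sigma>2 g2 \<tau>2)
  case (TLam x1 t) then show ?case by (simp add: comp_upL E2)
next
  case (TMu x1 c) then show ?case by (simp add: E3 comp_upE comp_upg)
qed auto



lemma ps_id'[simp]: "ps TVar (\<lambda>x. x) hole t = t" "psc TVar (\<lambda>x. x) hole c = c"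
  by (induction t and c) auto
lemma ps_id''[simp]: "ps TVar id hole t = t" "psc TVar id hole c = c"
  by (simp_all add: id_def)
lemma psE_id[simp]: "psE TVar id hole E = E" "psE TVar (\<lambda>x. x) hole E = E"
  by (induction E) (auto simp: id_def)

lemma ps_cong: "\<sigma> = \<sigma>' \<Longrightarrow> g = g' \<Longrightarrow> \<tau> = \<tau>' \<Longrightarrow> ps \<sigma> g \<tau> t = ps \<sigma>' g' \<tau>' t" by simp
lemma psc_cong: "\<sigma> = \<sigma>' \<Longrightarrow> g = g' \<Longrightarrow> \<tau> = \<tau>' \<Longrightarrow> psc \<sigma> g \<tau> c = psc \<sigma>' g' \<tau>' c" by simp

lemma sfL0_shg0: "(\<lambda>i. sfL 0 s (shg 0 i)) = TVar"
  by (rule ext) (auto simp: sfL_def shg_def)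
lemma sfM0_shg0: "(\<lambda>i. sfM 0 X (shg 0 i)) = hole"
  by (rule ext) (auto simp: sfM_def shg_def)

lemma sub_beta1: "substL (ps (upL \<sigma>) g (\<lambda>b. liftLE 0 (\<tau> b)) t) 0 s = ps (\<lambda>i. case i of 0 \<Rightarrow> s | Suc j \<Rightarrow> \<sigma> j) g \<tau> t"
  unfolding substL_ps ps_ps
  apply (rule ps_cong)
    apply (rule ext) subgoal for i by (cases i) (simp add: sfL_def, simp add: ps_liftL sfL0_shg0)
   apply (simp add: id_def)
  apply (rule ext) apply (simp add: psE_liftLE sfL0_shg0)
  done

lemma sub_beta2: "ps \<sigma> g \<tau> (substL t 0 r) = ps (\<lambda>i. case i of 0 \<Rightarrow> ps \<sigma> g \<tau> r | Suc j \<Rightarrow> \<sigma> j) g \<tau> t"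
  unfolding substL_ps ps_ps
  apply (rule ps_cong)
    apply (rule ext) apply (simp split: nat.split add: sfL_def)
   apply (simp add: id_def)
  apply simp
  done

lemma ps_sfM_liftM: "ps TVar id (sfM 0 X) (liftM 0 u) = liftM 0 u"
  unfolding ps_liftM by (simp add: sfM0_shg0 liftM_ps)
lemma ps_sfM_liftM': "ps TVar (\<lambda>x. x) (sfM 0 X) (liftM 0 u) = liftM 0 u"
  using ps_sfM_liftM by (simp add: id_def)
lemma psE_sfM_liftME: "psE TVar id (sfM 0 X) (liftME 0 E) = liftME 0 E"
  by (induction E) (auto simp: ps_sfM_liftM ps_sfM_liftM')

lemma mu_sub: "psc (\<lambda>i. liftM 0 (\<sigma> i)) (upg g) (upE \<tau>) (sstc 0 (liftME 0 F) c)
   = sstc 0 (liftME 0 (psE \<sigma> g \<tau> F)) (psc (\<lambda>i. liftM 0 (\<sigma> i)) (upg g) (upE \<tau>) c)"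
  unfolding sst_ps_c ps_ps_c
  apply (rule psc_cong)
    apply (rule ext) apply (simp add: ps_sfM_liftM)
   apply (simp add: id_def)
  apply (rule ext) subgoal for b by (cases b) (simp_all add: E4 psE_sfM_liftME)
  done

lemma ps_numeral[simp]: "ps \<sigma> g \<tau> (numeral_t n) = numeral_t n"
  by (induction n) auto

lemma red_fill: "red u u' \<Longrightarrow> red (fill E u) (fill E u')"
  by (induction E) (auto intro: red_redc.intros)

lemma red_ps: "red t t' \<Longrightarrow> red (ps \<sigma> g \<tau> t) (ps \<sigma> g \<tau> t')"
  and red_ps_c: "redc c c' \<Longrightarrow> redc (psc \<sigma> g \<tau> c) (psc \<sigma> g \<tau> c')"
proof (induction arbitrary: \<sigma> g \<tau> and \<sigma> g \<tau> rule: red_redc.inducts)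
  case (r_beta \<sigma>' t r)
  show ?case by (simp add: sub_beta2 flip: sub_beta1) (rule red_redc.r_beta)
next
  case (r_suc_mu \<rho> c)
  have "ps \<sigma> g \<tau> (TMu \<rho> (sstc 0 (ESucc Hole) c)) = TMu \<rho> (sstc 0 (ESucc Hole) (psc (\<lambda>i. liftM 0 (\<sigma> i)) (upg g) (upE \<tau>) c))"
    using mu_sub[of \<sigma> g \<tau> "ESucc Hole" c] by simp
  then show ?case by (simp add: red_redc.r_suc_mu)
next
  case (r_app_mu \<sigma>' \<tau>' c s)
  have "ps \<sigma> g \<tau> (TMu \<tau>' (sstc 0 (EApp Hole (liftM 0 s)) c)) = TMu \<tau>' (sstc 0 (EApp Hole (liftM 0 (ps \<sigma> g \<tau> s))) (psc (\<lambda>i. liftM 0 (\<sigma> i)) (upg g) (upE \<tau>) c))"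
    using mu_sub[of \<sigma> g \<tau> "EApp Hole s" c] by simp
  then show ?case by (simp add: red_redc.r_app_mu)
next
  case (r_nrec_mu \<rho> r s \<sigma>' c)
  have "ps \<sigma> g \<tau> (TMu \<rho> (sstc 0 (ENrec \<rho> (liftM 0 r) (liftM 0 s) Hole) c)) = TMu \<rho> (sstc 0 (ENrec \<rho> (liftM 0 (ps \<sigma> g \<tau> r)) (liftM 0 (ps \<sigma> g \<tau> s)) Hole) (psc (\<lambda>i. liftM 0 (\<sigma> i)) (upg g) (upE \<tau>) c))"
    using mu_sub[of \<sigma> g \<tau> "ENrec \<rho> r s Hole" c] by simp
  then show ?case by (simp add: red_redc.r_nrec_mu)
next
  case (r_nrec_S \<rho> r s n)
  then show ?case using red_redc.r_nrec_S[of \<rho> "ps \<sigma> g \<tau> r" "ps \<sigma> g \<tau> s" n] by simp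
next
  case (c_pass t t' \<alpha>)
  then show ?case by (simp add: red_fill red_redc.c_pass)
qed (auto intro: red_redc.intros)



inductive redE :: "ectx \<Rightarrow> ectx \<Rightarrow> bool" where
  e_app1: "redE E E' \<Longrightarrow> redE (EApp E t) (EApp E' t)"
| e_app2: "red t t' \<Longrightarrow> redE (EApp E t) (EApp E t')"
| e_suc: "redE E E' \<Longrightarrow> redE (ESucc E) (ESucc E')"
| e_nrec1: "red r r' \<Longrightarrow> redE (ENrec \<rho> r s E) (ENrec \<rho> r' s E)"
| e_nrec2: "red s s' \<Longrightarrow> redE (ENrec \<rho> r s E) (ENrec \<rho> r s' E)"
| e_nrec3: "redE E E' \<Longrightarrow> redE (ENrec \<rho> r s E) (ENrec \<rho> r s E')"

lemma redE_fill: "redE E E' \<Longrightarrow> red (fill E u) (fill E' u)"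
  by (induction rule: redE.induct) (auto intro: red_redc.intros)

lemma redE_psE: "redE E E' \<Longrightarrow> redE (psE \<sigma> g \<tau> E) (psE \<sigma> g \<tau> E')"
  by (induction rule: redE.induct) (auto intro: redE.intros red_ps)

lemma liftLE_ps: "liftLE k E = psE (shL k) id hole E"
  by (induction E) (auto simp: liftL_ps id_def)
lemma liftME_ps: "liftME k E = psE TVar (shg k) hole E"
  by (induction E) (auto simp: liftM_ps)

lemma redE_liftLE: "redE E E' \<Longrightarrow> redE (liftLE k E) (liftLE k E')"
  by (simp add: liftLE_ps redE_psE)
lemma redE_liftME: "redE E E' \<Longrightarrow> redE (liftME k E) (liftME k E')"
  by (simp add: liftME_ps redE_psE)
lemma red_liftL: "red t t' \<Longrightarrow> red (liftL k t) (liftL k t')"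
  by (simp add: liftL_ps red_ps)
lemma red_liftM: "red t t' \<Longrightarrow> red (liftM k t) (liftM k t')"
  by (simp add: liftM_ps red_ps)

lemma star_map: assumes "\<And>x y. R x y \<Longrightarrow> S (f x) (f y)" and "R\<^sup>*\<^sup>* a b" shows "S\<^sup>*\<^sup>* (f a) (f b)"
  using assms(2)
proof (induction rule: rtranclp_induct)
  case base then show ?case by simp
next
  case (step y z) then show ?case by (meson assms(1) rtranclp.rtrancl_into_rtrancl)
qed

lemma star_map': "R\<^sup>*\<^sup>* a b \<Longrightarrow> (\<And>x y. R x y \<Longrightarrow> S (f x) (f y)) \<Longrightarrow> S\<^sup>*\<^sup>* (f a) (f b)"
  by (rule star_map)

lemma ps_star: "(\<And>i. red\<^sup>*\<^sup>* (\<sigma> i) (\<sigma>' i)) \<Longrightarrow> (\<And>b. redE\<^sup>*\<^sup>* (\<tau> b) (\<tau>' b)) \<Longrightarrow> red\<^sup>*\<^sup>* (ps \<sigma> g \<tau> t) (ps \<sigma>' g \<tau>' t)"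
  and psc_star: "(\<And>i. red\<^sup>*\<^sup>* (\<sigma> i) (\<sigma>' i)) \<Longrightarrow> (\<And>b. redE\<^sup>*\<^sup>* (\<tau> b) (\<tau>' b)) \<Longrightarrow> redc\<^sup>*\<^sup>* (psc \<sigma> g \<tau> c) (psc \<sigma>' g \<tau>' c)"
proof (induction t and c arbitrary: \<sigma> \<sigma>' g \<tau> \<tau>' and \<sigma> \<sigma>' g \<tau> \<tau>')
  case (TVar x) then show ?case by simp
next
  case (TLam ty t)
  have a: "red\<^sup>*\<^sup>* (upL \<sigma> i) (upL \<sigma>' i)" for i
    using TLam.prems(1) by (cases i) (auto intro: star_map[where R=red and f="liftL 0"] red_liftL)
  have b: "redE\<^sup>*\<^sup>* (liftLE 0 (\<tau> b)) (liftLE 0 (\<tau>' b))" for b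
    using TLam.prems(2) by (auto intro: star_map[where R=redE and f="liftLE 0"] redE_liftLE)
  show ?case using TLam.IH[where \<sigma>="upL \<sigma>" and \<sigma>'="upL \<sigma>'" and g=g and \<tau>="\<lambda>b. liftLE 0 (\<tau> b)" and \<tau>'="\<lambda>b. liftLE 0 (\<tau>' b)", OF a b] by (simp add: star_map[where R=red and S=red and f="TLam ty", OF red_redc.c_lam])
next
  case (TApp t u)
  have "red\<^sup>*\<^sup>* (TApp (ps \<sigma> g \<tau> t) (ps \<sigma> g \<tau> u)) (TApp (ps \<sigma>' g \<tau>' t) (ps \<sigma> g \<tau> u))"
    using TApp.IH(1)[where \<sigma>=\<sigma> and \<sigma>'=\<sigma>' and g=g and \<tau>=\<tau> and \<tau>'=\<tau>', OF TApp.prems] by (rule star_map'[where R=red and S=red and f="\<lambda>x. TApp x _"]) (rule red_redc.c_app1)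
  moreover have "red\<^sup>*\<^sup>* (TApp (ps \<sigma>' g \<tau>' t) (ps \<sigma> g \<tau> u)) (TApp (ps \<sigma>' g \<tau>' t) (ps \<sigma>' g \<tau>' u))"
    using TApp.IH(2)[where \<sigma>=\<sigma> and \<sigma>'=\<sigma>' and g=g and \<tau>=\<tau> and \<tau>'=\<tau>', OF TApp.prems] by (rule star_map'[where R=red and S=red and f="\<lambda>x. TApp _ x"]) (rule red_redc.c_app2)
  ultimately show ?case by simp
next
  case (TMu ty c)
  have a: "red\<^sup>*\<^sup>* (liftM 0 (\<sigma> i)) (liftM 0 (\<sigma>' i))" for i
    using TMu.prems(1) by (auto intro: star_map[where R=red and f="liftM 0"] red_liftM)
  have b: "redE\<^sup>*\<^sup>* (upE \<tau> b) (upE \<tau>' b)" for b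
    using TMu.prems(2) by (cases b) (auto intro: star_map[where R=redE and f="liftME 0"] redE_liftME)
  show ?case using TMu.IH[where \<sigma>="\<lambda>i. liftM 0 (\<sigma> i)" and \<sigma>'="\<lambda>i. liftM 0 (\<sigma>' i)" and g="upg g" and \<tau>="upE \<tau>" and \<tau>'="upE \<tau>'", OF a b] by (simp add: star_map[where R=redc and S=red and f="TMu ty", OF red_redc.c_mu])
next
  case TZero then show ?case by simp
next
  case (TSucc t)
  show ?case using TSucc.IH[where \<sigma>=\<sigma> and \<sigma>'=\<sigma>' and g=g and \<tau>=\<tau> and \<tau>'=\<tau>', OF TSucc.prems] by (simp add: star_map[where R=red and S=red and f="TSucc", OF red_redc.c_suc])
next
  case (TNrec ty r u t)
  have "red\<^sup>*\<^sup>* (TNrec ty (ps \<sigma> g \<tau> r) (ps \<sigma> g \<tau> u) (ps \<sigma> g \<tau> t)) (TNrec ty (ps \<sigma>' g \<tau>' r) (ps \<sigma> g \<tau> u) (ps \<sigma> g \<tau> t))"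
    using TNrec.IH(1)[where \<sigma>=\<sigma> and \<sigma>'=\<sigma>' and g=g and \<tau>=\<tau> and \<tau>'=\<tau>', OF TNrec.prems] by (rule star_map'[where R=red and S=red and f="\<lambda>x. TNrec ty x _ _"]) (rule red_redc.c_nrec1)
  moreover have "red\<^sup>*\<^sup>* (TNrec ty (ps \<sigma>' g \<tau>' r) (ps \<sigma> g \<tau> u) (ps \<sigma> g \<tau> t)) (TNrec ty (ps \<sigma>' g \<tau>' r) (ps \<sigma>' g \<tau>' u) (ps \<sigma> g \<tau> t))"
    using TNrec.IH(2)[where \<sigma>=\<sigma> and \<sigma>'=\<sigma>' and g=g and \<tau>=\<tau> and \<tau>'=\<tau>', OF TNrec.prems] by (rule star_map'[where R=red and S=red and f="\<lambda>x. TNrec ty _ x _"]) (rule red_redc.c_nrec2)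
  moreover have "red\<^sup>*\<^sup>* (TNrec ty (ps \<sigma>' g \<tau>' r) (ps \<sigma>' g \<tau>' u) (ps \<sigma> g \<tau> t)) (TNrec ty (ps \<sigma>' g \<tau>' r) (ps \<sigma>' g \<tau>' u) (ps \<sigma>' g \<tau>' t))"
    using TNrec.IH(3)[where \<sigma>=\<sigma> and \<sigma>'=\<sigma>' and g=g and \<tau>=\<tau> and \<tau>'=\<tau>', OF TNrec.prems] by (rule star_map'[where R=red and S=red and f="\<lambda>x. TNrec ty _ _ x"]) (rule red_redc.c_nrec3)
  ultimately show ?case by simp
next
  case (Pass b u)
  have "red\<^sup>*\<^sup>* (fill (\<tau> b) (ps \<sigma> g \<tau> u)) (fill (\<tau> b) (ps \<sigma>' g \<tau>' u))"
    using Pass.IH[where \<sigma>=\<sigma> and \<sigma>'=\<sigma>' and g=g and \<tau>=\<tau> and \<tau>'=\<tau>', OF Pass.prems] by (rule star_map'[where R=red and S=red and f="fill (\<tau> b)"]) (rule red_fill)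
  moreover have "red\<^sup>*\<^sup>* (fill (\<tau> b) (ps \<sigma>' g \<tau>' u)) (fill (\<tau>' b) (ps \<sigma>' g \<tau>' u))"
    using Pass.prems(2)[of b] by (rule star_map'[where R=redE and S=red and f="\<lambda>E. fill E (ps \<sigma>' g \<tau>' u)"]) (rule redE_fill)
  ultimately have "red\<^sup>*\<^sup>* (fill (\<tau> b) (ps \<sigma> g \<tau> u)) (fill (\<tau>' b) (ps \<sigma>' g \<tau>' u))" by simp
  then show ?case by (simp add: star_map[where R=red and S=redc and f="Pass (g b)", OF red_redc.c_pass])
qed



inductive SNC :: "cmd \<Rightarrow> bool" where
  SNC_intro: "(\<And>c'. redc c c' \<Longrightarrow> SNC c') \<Longrightarrow> SNC c"
inductive SNE :: "ectx \<Rightarrow> bool" where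
  SNE_intro: "(\<And>E'. redE E E' \<Longrightarrow> SNE E') \<Longrightarrow> SNE E"

lemma SNA_red: "SNA t \<Longrightarrow> red t t' \<Longrightarrow> SNA t'"
  by (induction rule: SNA.induct) auto
lemma SNA_star: "red\<^sup>*\<^sup>* t t' \<Longrightarrow> SNA t \<Longrightarrow> SNA t'"
  by (induction rule: rtranclp_induct) (auto intro: SNA_red)
lemma SNC_red: "SNC t \<Longrightarrow> redc t t' \<Longrightarrow> SNC t'"
  by (induction rule: SNC.induct) auto
lemma SNC_star: "redc\<^sup>*\<^sup>* t t' \<Longrightarrow> SNC t \<Longrightarrow> SNC t'"
  by (induction rule: rtranclp_induct) (auto intro: SNC_red)
lemma SNE_red: "SNE t \<Longrightarrow> redE t t' \<Longrightarrow> SNE t'"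
  by (induction rule: SNE.induct) auto

lemma SNA_map_aux: "SNA z \<Longrightarrow> (\<And>x y. red x y \<Longrightarrow> red (f x) (f y)) \<Longrightarrow> z = f x \<Longrightarrow> SNA x"
proof (induction arbitrary: x rule: SNA.induct)
  case (SNA_intro t)
  show ?case by (rule SNA.intros) (use SNA_intro in blast)
qed
lemma SNA_map: "SNA (f x) \<Longrightarrow> (\<And>x y. red x y \<Longrightarrow> red (f x) (f y)) \<Longrightarrow> SNA x"
  using SNA_map_aux by blast

lemma SNC_map_aux: "SNC z \<Longrightarrow> (\<And>x y. redc x y \<Longrightarrow> redc (f x) (f y)) \<Longrightarrow> z = f x \<Longrightarrow> SNC x"
proof (induction arbitrary: x rule: SNC.induct)
  case (SNC_intro t)
  show ?case by (rule SNC.intros) (use SNC_intro in blast)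
qed
lemma SNC_map: "SNC (f x) \<Longrightarrow> (\<And>x y. redc x y \<Longrightarrow> redc (f x) (f y)) \<Longrightarrow> SNC x"
  using SNC_map_aux by blast

lemma SNE_of_fill_aux: "SNA z \<Longrightarrow> z = fill E u \<Longrightarrow> SNE E"
proof (induction arbitrary: E rule: SNA.induct)
  case (SNA_intro t)
  show ?case by (rule SNE.intros) (use SNA_intro redE_fill in blast)
qed
lemma SNE_of_fill: "SNA (fill E u) \<Longrightarrow> SNE E"
  using SNE_of_fill_aux by blast

lemma SNA_fill_sub: "SNA (fill E u) \<Longrightarrow> SNA u"
  by (erule SNA_map) (rule red_fill)

lemma SNA_ps: "SNA (ps \<sigma> g \<tau> t) \<Longrightarrow> SNA t"
  by (erule SNA_map) (rule red_ps)
lemma SNC_psc: "SNC (psc \<sigma> g \<tau> c) \<Longrightarrow> SNC c"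
  by (erule SNC_map) (rule red_ps_c)

lemma SNC_Pass: "SNA u \<Longrightarrow> SNC (Pass a u)"
proof (induction rule: SNA.induct)
  case (SNA_intro t)
  show ?case by (rule SNC.intros) (use SNA_intro in \<open>auto elim: redc.cases\<close>)
qed

lemma SNA_numeral: "SNA (numeral_t n)"
proof -
  have "\<not> red (numeral_t n) y" for y
  proof (induction n arbitrary: y)
    case 0 then show ?case by (auto elim: red.cases)
  next
    case (Suc n)
    show ?case
    proof
      assume "red (numeral_t (Suc n)) y"
      then have "red (TSucc (numeral_t n)) y" by simp
      then show False
      proof (cases rule: red.cases)
        case (r_suc_mu \<rho> c) then show ?thesis by (cases n) auto
      next
        case c_suc then show ?thesis using Suc.IH by auto
      qed
    qed
  qed
  then show ?thesis by (auto intro: SNA.intros)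
qed

lemma SNA_lam: "SNA t \<Longrightarrow> SNA (TLam ty t)"
proof (induction rule: SNA.induct)
  case (SNA_intro t)
  show ?case by (rule SNA.intros) (use SNA_intro in \<open>auto elim: red.cases\<close>)
qed

definition neutral :: "trm \<Rightarrow> bool" where
  "neutral u = (case u of TVar _ \<Rightarrow> True | TApp _ _ \<Rightarrow> True | TNrec _ _ _ _ \<Rightarrow> True | _ \<Rightarrow> False)"

lemma numeral_ne[simp]: "numeral_t n \<noteq> TApp a b" "numeral_t n \<noteq> TNrec \<rho> a b d" "numeral_t n \<noteq> TVar i"
  "numeral_t n \<noteq> TLam \<rho> a" "numeral_t n \<noteq> TMu \<rho> c"
  "TApp a b \<noteq> numeral_t n" "TNrec \<rho> a b d \<noteq> numeral_t n" "TVar i \<noteq> numeral_t n"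
  "TLam \<rho> a \<noteq> numeral_t n" "TMu \<rho> c \<noteq> numeral_t n"
  by (cases n; simp)+

lemma fill_neutral_numeral: "neutral u \<Longrightarrow> fill E u \<noteq> numeral_t n"
proof (induction E arbitrary: n)
  case Hole then show ?case by (cases n; cases u) (auto simp: neutral_def)
next
  case (ESucc E) then show ?case by (cases n) auto
qed auto

lemma fill_mu_numeral: "fill E (TMu \<rho> c) \<noteq> numeral_t n"
proof (induction E arbitrary: n)
  case Hole then show ?case by (cases n) auto
next
  case (ESucc E) then show ?case by (cases n) auto
qed auto



lemma D_n: "neutral u \<Longrightarrow> red (fill E u) y \<Longrightarrow> (\<exists>E'. redE E E' \<and> y = fill E' u) \<or> (\<exists>u'. red u u' \<and> y = fill E u')"
proof (induction E arbitrary: y)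
  case Hole then show ?case by auto
next
  case (EApp E t)
  from EApp.prems(2) have "red (TApp (fill E u) t) y" by simp
  then show ?case
  proof (cases rule: red.cases)
    case r_beta with EApp.prems(1) show ?thesis by (cases E) (auto simp: neutral_def)
  next
    case r_app_mu with EApp.prems(1) show ?thesis by (cases E) (auto simp: neutral_def)
  next
    case c_app1
    then obtain t' where h: "y = TApp t' t" "red (fill E u) t'" by auto
    from EApp.IH[OF EApp.prems(1) h(2)] h(1) show ?thesis by (auto intro: redE.intros)
  next
    case c_app2
    then show ?thesis by (auto intro: redE.intros)
  qed
next
  case (ESucc E)
  from ESucc.prems(2) have "red (TSucc (fill E u)) y" by simp
  then show ?case
  proof (cases rule: red.cases)
    case r_suc_mu with ESucc.prems(1) show ?thesis by (cases E) (auto simp: neutral_def)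
  next
    case c_suc
    then obtain t' where h: "y = TSucc t'" "red (fill E u) t'" by auto
    from ESucc.IH[OF ESucc.prems(1) h(2)] h(1) show ?thesis by (auto intro: redE.intros)
  qed
next
  case (ENrec \<rho> r s E)
  from ENrec.prems(2) have "red (TNrec \<rho> r s (fill E u)) y" by simp
  then show ?case
  proof (cases rule: red.cases)
    case r_nrec_0 with ENrec.prems(1) show ?thesis by (cases E) (auto simp: neutral_def)
  next
    case r_nrec_S with ENrec.prems(1) fill_neutral_numeral[OF ENrec.prems(1), of E] show ?thesis by (auto simp flip: numeral_t.simps)
  next
    case r_nrec_mu with ENrec.prems(1) show ?thesis by (cases E) (auto simp: neutral_def)
  next
    case c_nrec3
    then obtain t' where h: "y = TNrec \<rho> r s t'" "red (fill E u) t'" by auto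
    from ENrec.IH[OF ENrec.prems(1) h(2)] h(1) show ?thesis by (auto intro: redE.intros)
  qed (auto intro: redE.intros)
qed

lemma D_mu: "red (fill E (TMu \<rho> c)) y \<Longrightarrow> (\<exists>E'. redE E E' \<and> y = fill E' (TMu \<rho> c)) \<or> (\<exists>c'. redc c c' \<and> y = fill E (TMu \<rho> c'))
   \<or> (\<exists>E1 F \<rho>'. E = ecomp E1 F \<and> elen F = 1 \<and> y = fill E1 (TMu \<rho>' (sstc 0 (liftME 0 F) c)))"
proof (induction E arbitrary: y)
  case Hole then show ?case by (auto elim: red.cases)
next
  case (EApp E t)
  from EApp.prems have "red (TApp (fill E (TMu \<rho> c)) t) y" by simp
  then show ?case
  proof (cases rule: red.cases)
    case r_beta then show ?thesis by (cases E) auto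
  next
    case r_app_mu
    then have "E = Hole" by (cases E) auto
    with r_app_mu show ?thesis
      by (intro disjI2) (rule exI[of _ Hole], rule exI[of _ "EApp Hole t"], auto)
  next
    case c_app1
    then obtain t' where h: "y = TApp t' t" "red (fill E (TMu \<rho> c)) t'" by auto
    from EApp.IH[OF h(2)] h(1) show ?thesis
      by (auto intro: redE.intros) (metis ecomp.simps(2) fill.simps(2))
  next
    case c_app2
    then show ?thesis by (auto intro: redE.intros)
  qed
next
  case (ESucc E)
  from ESucc.prems have "red (TSucc (fill E (TMu \<rho> c))) y" by simp
  then show ?case
  proof (cases rule: red.cases)
    case r_suc_mu
    then have "E = Hole" by (cases E) auto
    with r_suc_mu show ?thesis
      by (intro disjI2) (rule exI[of _ Hole], rule exI[of _ "ESucc Hole"], auto)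
  next
    case c_suc
    then obtain t' where h: "y = TSucc t'" "red (fill E (TMu \<rho> c)) t'" by auto
    from ESucc.IH[OF h(2)] h(1) show ?thesis
      by (auto intro: redE.intros) (metis ecomp.simps(3) fill.simps(3))
  qed
next
  case (ENrec \<rho>0 r s E)
  from ENrec.prems have "red (TNrec \<rho>0 r s (fill E (TMu \<rho> c))) y" by simp
  then show ?case
  proof (cases rule: red.cases)
    case r_nrec_0 then show ?thesis by (cases E) auto
  next
    case r_nrec_S then show ?thesis using fill_mu_numeral[of E \<rho> c] by (auto simp flip: numeral_t.simps)
  next
    case r_nrec_mu
    then have "E = Hole" by (cases E) auto
    with r_nrec_mu show ?thesis
      by (intro disjI2) (rule exI[of _ Hole], rule exI[of _ "ENrec \<rho>0 r s Hole"], auto)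
  next
    case c_nrec3
    then obtain t' where h: "y = TNrec \<rho>0 r s t'" "red (fill E (TMu \<rho> c)) t'" by auto
    from ENrec.IH[OF h(2)] h(1) show ?thesis
      by (auto intro: redE.intros) (metis ecomp.simps(4) fill.simps(4))
  qed (auto intro: redE.intros)
qed



lemma no_red_numeral: "\<not> red (numeral_t n) y"
proof (induction n arbitrary: y)
  case 0 then show ?case by (auto elim: red.cases)
next
  case (Suc n)
  show ?case
  proof
    assume "red (numeral_t (Suc n)) y"
    then have "red (TSucc (numeral_t n)) y" by simp
    then show False
    proof (cases rule: red.cases)
      case r_suc_mu then show ?thesis by (cases n) auto
    next
      case c_suc then show ?thesis using Suc.IH by auto
    qed
  qed
qed

lemma numeral_inj: "numeral_t a = numeral_t b \<Longrightarrow> a = b"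
  by (induction a arbitrary: b) (case_tac b; simp)+

lemma no_red_TVar: "\<not> red (TVar i) y" by (auto elim: red.cases)

lemma red_substL: "red t t' \<Longrightarrow> red (substL t k s) (substL t' k s)"
  by (simp add: substL_ps red_ps)
lemma star_substL: "red s s' \<Longrightarrow> red\<^sup>*\<^sup>* (substL t k s) (substL t k s')"
  unfolding substL_ps by (rule ps_star) (auto simp: sfL_def)

lemma star_fill: assumes "red\<^sup>*\<^sup>* a b" shows "red\<^sup>*\<^sup>* (fill E a) (fill E b)"
  using assms by (rule star_map'[where R=red and S=red and f="fill E"]) (rule red_fill)

lemma lam_inv: "red (TLam ty t) y \<Longrightarrow> \<exists>t'. y = TLam ty t' \<and> red t t'"
  by (auto elim: red.cases)

lemma neutral_simps[simp]: "neutral (TApp a b)" "neutral (TNrec \<rho> a b d)" "neutral (TVar i)"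
  by (auto simp: neutral_def)

lemma lemA: "SNA s \<Longrightarrow> SNA (fill E (substL t 0 s)) \<Longrightarrow> SNA (fill E (TApp (TLam ty t) s))"
proof (induction s arbitrary: E t rule: SNA.induct)
  case (SNA_intro s)
  note outer = SNA_intro.IH
  have "SNA X \<Longrightarrow> X = fill E (substL t 0 s) \<Longrightarrow> SNA (fill E (TApp (TLam ty t) s))" for X E t
  proof (induction X arbitrary: E t rule: SNA.induct)
    case (SNA_intro X)
    have SNX: "SNA X" using SNA_intro.hyps by (rule SNA.intros)
    show ?case
    proof (rule SNA.intros)
      fix y assume "red (fill E (TApp (TLam ty t) s)) y"
      from D_n[OF neutral_simps(1) this] show "SNA y"
      proof (elim disjE exE conjE)
        fix E' assume "redE E E'" "y = fill E' (TApp (TLam ty t) s)"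
        then show "SNA y" using SNA_intro.IH[of "fill E' (substL t 0 s)" E' t] SNA_intro.prems redE_fill by auto
      next
        fix u' assume u': "red (TApp (TLam ty t) s) u'" "y = fill E u'"
        from u'(1) show "SNA y"
        proof (cases rule: red.cases)
          case r_beta then show ?thesis using u'(2) SNX SNA_intro.prems by simp
        next
          case c_app1
          then obtain t' where "u' = TApp (TLam ty t') s" "red t t'" by (auto dest: lam_inv)
          then show ?thesis using SNA_intro.IH[of "fill E (substL t' 0 s)" E t'] SNA_intro.prems u'(2)
            by (auto intro: red_fill red_substL)
        next
          case c_app2
          then obtain s' where s': "u' = TApp (TLam ty t) s'" "red s s'" by auto
          have "SNA (fill E (substL t 0 s'))"
            using SNA_star[OF star_fill[OF star_substL[OF s'(2)]]] SNX SNA_intro.prems by auto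
          then show ?thesis using outer[OF s'(2)] s' u'(2) by auto
        qed
      qed
    qed
  qed
  then show ?case using SNA_intro.prems by blast
qed

lemma lemC0: "SNA s \<Longrightarrow> SNA (fill E r) \<Longrightarrow> SNA (fill E (TNrec \<rho> r s TZero))"
proof (induction s arbitrary: E r rule: SNA.induct)
  case (SNA_intro s)
  note outer = SNA_intro.IH
  have "SNA X \<Longrightarrow> X = fill E r \<Longrightarrow> SNA (fill E (TNrec \<rho> r s TZero))" for X E r
  proof (induction X arbitrary: E r rule: SNA.induct)
    case (SNA_intro X)
    have SNX: "SNA X" using SNA_intro.hyps by (rule SNA.intros)
    show ?case
    proof (rule SNA.intros)
      fix y assume "red (fill E (TNrec \<rho> r s TZero)) y"
      from D_n[OF neutral_simps(2) this] show "SNA y"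
      proof (elim disjE exE conjE)
        fix E' assume "redE E E'" "y = fill E' (TNrec \<rho> r s TZero)"
        then show "SNA y" using SNA_intro.IH[of "fill E' r" E' r] SNA_intro.prems redE_fill by auto
      next
        fix u' assume u': "red (TNrec \<rho> r s TZero) u'" "y = fill E u'"
        from u'(1) show "SNA y"
        proof (cases rule: red.cases)
          case r_nrec_0 then show ?thesis using u'(2) SNX SNA_intro.prems by simp
        next
          case c_nrec1
          then obtain r' where "u' = TNrec \<rho> r' s TZero" "red r r'" by auto
          then show ?thesis using SNA_intro.IH[of "fill E r'" E r'] SNA_intro.prems u'(2)
            by (auto intro: red_fill)
        next
          case c_nrec2
          then obtain s' where s': "u' = TNrec \<rho> r s' TZero" "red s s'" by auto
          then show ?thesis using outer[OF s'(2)] SNX SNA_intro.prems u'(2) by auto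
        next
          case c_nrec3
          then show ?thesis using no_red_numeral[of 0] by auto
        qed
      qed
    qed
  qed
  then show ?case using SNA_intro.prems by blast
qed

lemma lemCS: "SNA s \<Longrightarrow> SNA (fill E (TApp (TApp s (numeral_t n)) (TNrec \<rho> r s (numeral_t n))))
   \<Longrightarrow> SNA (fill E (TNrec \<rho> r s (TSucc (numeral_t n))))"
proof (induction s arbitrary: E r rule: SNA.induct)
  case (SNA_intro s)
  note outer = SNA_intro.IH
  have "SNA X \<Longrightarrow> X = fill E (TApp (TApp s (numeral_t n)) (TNrec \<rho> r s (numeral_t n)))
     \<Longrightarrow> SNA (fill E (TNrec \<rho> r s (TSucc (numeral_t n))))" for X E r
  proof (induction X arbitrary: E r rule: SNA.induct)
    case (SNA_intro X)
    have SNX: "SNA X" using SNA_intro.hyps by (rule SNA.intros)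
    show ?case
    proof (rule SNA.intros)
      fix y assume "red (fill E (TNrec \<rho> r s (TSucc (numeral_t n)))) y"
      from D_n[OF neutral_simps(2) this] show "SNA y"
      proof (elim disjE exE conjE)
        fix E' assume "redE E E'" "y = fill E' (TNrec \<rho> r s (TSucc (numeral_t n)))"
        then show "SNA y" using SNA_intro.IH[of "fill E' (TApp (TApp s (numeral_t n)) (TNrec \<rho> r s (numeral_t n)))" E' r] SNA_intro.prems redE_fill by auto
      next
        fix u' assume u': "red (TNrec \<rho> r s (TSucc (numeral_t n))) u'" "y = fill E u'"
        from u'(1) show "SNA y"
        proof (cases rule: red.cases)
          case r_nrec_S then show ?thesis using u'(2) SNX SNA_intro.prems by (auto dest: numeral_inj)
        next
          case c_nrec1
          then obtain r' where "u' = TNrec \<rho> r' s (TSucc (numeral_t n))" "red r r'" by auto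
          then show ?thesis using SNA_intro.IH[of "fill E (TApp (TApp s (numeral_t n)) (TNrec \<rho> r' s (numeral_t n)))" E r'] SNA_intro.prems u'(2)
            by (auto intro: red_fill red_redc.intros)
        next
          case c_nrec2
          then obtain s' where s': "u' = TNrec \<rho> r s' (TSucc (numeral_t n))" "red s s'" by auto
          have "red\<^sup>*\<^sup>* (TApp (TApp s (numeral_t n)) (TNrec \<rho> r s (numeral_t n))) (TApp (TApp s' (numeral_t n)) (TNrec \<rho> r s (numeral_t n)))"
            using s'(2) by (auto intro: red_redc.intros)
          moreover have "red\<^sup>*\<^sup>* (TApp (TApp s' (numeral_t n)) (TNrec \<rho> r s (numeral_t n))) (TApp (TApp s' (numeral_t n)) (TNrec \<rho> r s' (numeral_t n)))"
            using s'(2) by (auto intro: red_redc.intros)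
          ultimately have "SNA (fill E (TApp (TApp s' (numeral_t n)) (TNrec \<rho> r s' (numeral_t n))))"
            using SNX SNA_intro.prems by (metis SNA_star star_fill rtranclp_trans)
          then show ?thesis using outer[OF s'(2)] s' u'(2) by auto
        next
          case c_nrec3
          then show ?thesis using no_red_numeral[of "Suc n"] by auto
        qed
      qed
    qed
  qed
  then show ?case using SNA_intro.prems by blast
qed

lemma SNA_fill_var: "SNE E \<Longrightarrow> SNA (fill E (TVar i))"
proof (induction rule: SNE.induct)
  case (SNE_intro E)
  show ?case
  proof (rule SNA.intros)
    fix y assume "red (fill E (TVar i)) y"
    from D_n[OF neutral_simps(3) this] show "SNA y" using SNE_intro.IH no_red_TVar by auto
  qed
qed

lemma SNA_fill_varapp: "SNA s \<Longrightarrow> SNE E \<Longrightarrow> SNA (fill E (TApp (TVar i) s))"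
proof (induction s arbitrary: E rule: SNA.induct)
  case (SNA_intro s)
  note outer = SNA_intro.IH
  from SNA_intro.prems show ?case
  proof (induction rule: SNE.induct)
    case (SNE_intro E)
    show ?case
    proof (rule SNA.intros)
      fix y assume "red (fill E (TApp (TVar i) s)) y"
      from D_n[OF neutral_simps(1) this] show "SNA y"
      proof (elim disjE exE conjE)
        fix E' assume "redE E E'" "y = fill E' (TApp (TVar i) s)"
        then show "SNA y" using SNE_intro.IH by auto
      next
        fix u' assume u': "red (TApp (TVar i) s) u'" "y = fill E u'"
        from u'(1) show "SNA y"
        proof (cases rule: red.cases)
          case c_app1 then show ?thesis using no_red_TVar by auto
        next
          case c_app2
          then obtain s' where s': "u' = TApp (TVar i) s'" "red s s'" by auto
          then show ?thesis using outer[OF s'(2)] SNE_intro.hyps u'(2) by (auto intro: SNE.intros)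
        qed
      qed
    qed
  qed
qed



lemma redE_elen: "redE E E' \<Longrightarrow> elen E' = elen E"
  by (induction rule: redE.induct) auto
lemma redE_ecomp: "redE E E' \<Longrightarrow> redE (ecomp E F) (ecomp E' F)"
  by (induction rule: redE.induct) (auto intro: redE.intros)

lemma SNE_ecomp_left_aux: "SNE Z \<Longrightarrow> Z = ecomp E1 F \<Longrightarrow> SNE E1"
proof (induction arbitrary: E1 rule: SNE.induct)
  case (SNE_intro Z)
  show ?case by (rule SNE.intros) (use SNE_intro redE_ecomp in blast)
qed
lemma SNE_ecomp_left: "SNE (ecomp E1 F) \<Longrightarrow> SNE E1"
  using SNE_ecomp_left_aux by blast

lemma sst_comp: "sstc 0 (liftME 0 E1) (sstc 0 (liftME 0 F) c) = sstc 0 (liftME 0 (ecomp E1 F)) c"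
  unfolding sst_ps_c ps_ps_c
  apply (rule psc_cong)
    apply (rule ext) apply simp
   apply (simp add: id_def)
  apply (rule ext) subgoal for b by (cases b) (simp_all add: psE_sfM_liftME)
  done

lemma sst_star: "redE E E' \<Longrightarrow> redc\<^sup>*\<^sup>* (sstc 0 (liftME 0 E) c) (sstc 0 (liftME 0 E') c)"
  unfolding sst_ps_c
  by (rule psc_star) (auto simp: sfM_def intro: redE_liftME)

lemma redc_sst: "redc c c' \<Longrightarrow> redc (sstc a E c) (sstc a E c')"
  unfolding sst_ps_c by (rule red_ps_c)

lemma lemB_aux: "\<forall>E c \<rho>. elen E = n \<longrightarrow> SNE E \<longrightarrow> SNC (sstc 0 (liftME 0 E) c) \<longrightarrow> SNA (fill E (TMu \<rho> c))"
proof (induction n rule: less_induct)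
  case (less n)
  have "SNE E \<Longrightarrow> elen E = n \<Longrightarrow> SNC X \<Longrightarrow> X = sstc 0 (liftME 0 E) c \<Longrightarrow> SNA (fill E (TMu \<rho> c))" for E X c \<rho>
  proof (induction E arbitrary: X c \<rho> rule: SNE.induct)
    case (SNE_intro E)
    have SNEE: "SNE E" using SNE_intro.hyps by (rule SNE.intros)
    from SNE_intro.prems(2,3) show ?case
    proof (induction X arbitrary: c \<rho> rule: SNC.induct)
      case (SNC_intro X)
      have SNX: "SNC X" using SNC_intro.hyps by (rule SNC.intros)
      show ?case
      proof (rule SNA.intros)
        fix y assume "red (fill E (TMu \<rho> c)) y"
        from D_mu[OF this] show "SNA y"
        proof (elim disjE exE conjE)
          fix E' assume E': "redE E E'" "y = fill E' (TMu \<rho> c)"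
          have "SNC (sstc 0 (liftME 0 E') c)"
            using SNC_star[OF sst_star[OF E'(1)]] SNX SNC_intro.prems by simp
          then show "SNA y" using SNE_intro.IH[OF E'(1)] E' SNE_intro.prems(1) redE_elen[OF E'(1)] by auto
        next
          fix c' assume c': "redc c c'" "y = fill E (TMu \<rho> c')"
          show "SNA y" using SNC_intro.IH[of "sstc 0 (liftME 0 E) c'" c' \<rho>] c' SNC_intro.prems redc_sst by auto
        next
          fix E1 F \<rho>' assume h: "E = ecomp E1 F" "elen F = 1" "y = fill E1 (TMu \<rho>' (sstc 0 (liftME 0 F) c))"
          have "elen E1 < n" using h SNE_intro.prems(1) by simp
          moreover have "SNE E1" using SNEE h(1) SNE_ecomp_left by simp
          moreover have "SNC (sstc 0 (liftME 0 E1) (sstc 0 (liftME 0 F) c))"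
            using SNX SNC_intro.prems h(1) by (simp add: sst_comp)
          ultimately show "SNA y" using less.IH h(3) by blast
        qed
      qed
    qed
  qed
  then show ?case by blast
qed

lemma lemB: "SNE E \<Longrightarrow> SNC (sstc 0 (liftME 0 E) c) \<Longrightarrow> SNA (fill E (TMu \<rho> c))"
  using lemB_aux by blast



primrec K :: "ty \<Rightarrow> ectx set" where
  "K Nat = {E. \<forall>n. SNA (fill E (numeral_t n))}"
| "K (Arr \<sigma> \<tau>) = insert Hole {ecomp E (EApp Hole s) | E s. E \<in> K \<tau> \<and> (\<forall>E'\<in>K \<sigma>. SNA (fill E' s))}"

definition R :: "ty \<Rightarrow> trm set" where "R \<rho> = {t. \<forall>E\<in>K \<rho>. SNA (fill E t)}"

declare K.simps[simp del]

lemma K_Nat: "E \<in> K Nat \<longleftrightarrow> (\<forall>n. SNA (fill E (numeral_t n)))"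
  by (simp add: K.simps)
lemma K_ArrE: "E \<in> K (Arr \<sigma> \<tau>) \<Longrightarrow> E \<noteq> Hole \<Longrightarrow> \<exists>E1 s. E = ecomp E1 (EApp Hole s) \<and> E1 \<in> K \<tau> \<and> s \<in> R \<sigma>"
  by (auto simp: K.simps R_def)
lemma K_arr: "E \<in> K \<tau> \<Longrightarrow> s \<in> R \<sigma> \<Longrightarrow> ecomp E (EApp Hole s) \<in> K (Arr \<sigma> \<tau>)"
  by (auto simp: R_def K.simps)
lemma Hole_K: "Hole \<in> K \<rho>"
  by (cases \<rho>) (auto simp: SNA_numeral K.simps)
lemma RI: "(\<And>E. E \<in> K \<rho> \<Longrightarrow> SNA (fill E t)) \<Longrightarrow> t \<in> R \<rho>"
  by (simp add: R_def)
lemma RD: "t \<in> R \<rho> \<Longrightarrow> E \<in> K \<rho> \<Longrightarrow> SNA (fill E t)"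
  by (simp add: R_def)

lemma R_SN: "t \<in> R \<rho> \<Longrightarrow> SNA t"
  using RD[OF _ Hole_K] by fastforce

lemma SNE_Hole: "SNE Hole"
  by (rule SNE.intros) (auto elim: redE.cases)

lemma K_SNE: "E \<in> K \<rho> \<Longrightarrow> SNE E"
proof (induction \<rho> arbitrary: E)
  case Nat
  then have "\<forall>n. SNA (fill E (numeral_t n))" by (simp add: K_Nat)
  then have "SNA (fill E (numeral_t 0))" by blast
  then show ?case by (rule SNE_of_fill)
next
  case (Arr \<sigma> \<tau>)
  show ?case
  proof (cases "E = Hole")
    case True then show ?thesis by (simp add: SNE_Hole)
  next
    case False
    with K_ArrE[OF Arr.prems] obtain E1 s where h: "E = ecomp E1 (EApp Hole s)" "E1 \<in> K \<tau>" "s \<in> R \<sigma>"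
      by auto
    have "SNA s" using h(3) by (rule R_SN)
    then have "SNA (fill E1 (TApp (TVar 0) s))" using SNA_fill_varapp Arr.IH(2)[OF h(2)] by blast
    then have "SNA (fill E (TVar 0))" using h(1) by simp
    then show ?thesis by (rule SNE_of_fill)
  qed
qed

lemma var_R: "TVar i \<in> R \<rho>"
  by (auto intro!: RI SNA_fill_var K_SNE)

lemma app_R: "t \<in> R (Arr \<sigma> \<tau>) \<Longrightarrow> s \<in> R \<sigma> \<Longrightarrow> TApp t s \<in> R \<tau>"
proof (rule RI)
  fix E assume t: "t \<in> R (Arr \<sigma> \<tau>)" and s: "s \<in> R \<sigma>" and E: "E \<in> K \<tau>"
  have "ecomp E (EApp Hole s) \<in> K (Arr \<sigma> \<tau>)" using E s by (rule K_arr)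
  from RD[OF t this] show "SNA (fill E (TApp t s))" by simp
qed

lemma numeral_R: "numeral_t n \<in> R Nat"
  by (rule RI) (simp add: K_Nat)

lemma succ_R: "t \<in> R Nat \<Longrightarrow> TSucc t \<in> R Nat"
proof (rule RI)
  fix E assume t: "t \<in> R Nat" and E: "E \<in> K Nat"
  have "ecomp E (ESucc Hole) \<in> K Nat" using E unfolding K_Nat
    by (metis fill.simps(1,3) fill_ecomp numeral_t.simps(2))
  from RD[OF t this] show "SNA (fill E (TSucc t))" by simp
qed

lemma nrec_num_R: "r \<in> R \<rho> \<Longrightarrow> s \<in> R (Arr Nat (Arr \<rho> \<rho>)) \<Longrightarrow> TNrec \<rho> r s (numeral_t n) \<in> R \<rho>"
proof (induction n)
  case 0
  show ?case
  proof (rule RI)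
    fix E assume "E \<in> K \<rho>"
    then have "SNA (fill E r)" using 0 by (auto intro: RD)
    then show "SNA (fill E (TNrec \<rho> r s (numeral_t 0)))" using lemC0 R_SN[OF 0(2)] by simp
  qed
next
  case (Suc n)
  have A: "TApp (TApp s (numeral_t n)) (TNrec \<rho> r s (numeral_t n)) \<in> R \<rho>"
    using app_R[OF app_R[OF Suc.prems(2) numeral_R] Suc.IH[OF Suc.prems]] .
  show ?case
  proof (rule RI)
    fix E assume "E \<in> K \<rho>"
    with A have "SNA (fill E (TApp (TApp s (numeral_t n)) (TNrec \<rho> r s (numeral_t n))))"
      by (auto intro: RD)
    then show "SNA (fill E (TNrec \<rho> r s (numeral_t (Suc n))))" using lemCS R_SN[OF Suc.prems(2)] by simp
  qed
qed

lemma nrec_R: "r \<in> R \<rho> \<Longrightarrow> s \<in> R (Arr Nat (Arr \<rho> \<rho>)) \<Longrightarrow> t \<in> R Nat \<Longrightarrow> TNrec \<rho> r s t \<in> R \<rho>"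
proof (rule RI)
  fix E assume r: "r \<in> R \<rho>" and s: "s \<in> R (Arr Nat (Arr \<rho> \<rho>))" and t: "t \<in> R Nat" and E: "E \<in> K \<rho>"
  have "ecomp E (ENrec \<rho> r s Hole) \<in> K Nat"
    unfolding K_Nat using nrec_num_R[OF r s] E by (auto intro: RD)
  from RD[OF t this] show "SNA (fill E (TNrec \<rho> r s t))" by simp
qed

lemma lam_R: assumes H: "\<And>s. s \<in> R \<sigma> \<Longrightarrow> substL t 0 s \<in> R \<tau>" shows "TLam \<sigma> t \<in> R (Arr \<sigma> \<tau>)"
proof (rule RI)
  fix E assume E: "E \<in> K (Arr \<sigma> \<tau>)"
  show "SNA (fill E (TLam \<sigma> t))"
  proof (cases "E = Hole")
    case True
    have "SNA (substL t 0 (TVar 0))" using H[OF var_R] by (rule R_SN)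
    then have "SNA t" by (rule SNA_map) (rule red_substL)
    then show ?thesis using True by (simp add: SNA_lam)
  next
    case False
    with K_ArrE[OF E] obtain E1 s where h: "E = ecomp E1 (EApp Hole s)" "E1 \<in> K \<tau>" "s \<in> R \<sigma>"
      by auto
    have "SNA (fill E1 (substL t 0 s))" using RD[OF H[OF h(3)] h(2)] .
    then show ?thesis using lemA R_SN[OF h(3)] h(1) by simp
  qed
qed

lemma mu_R: "(\<And>E. E \<in> K \<rho> \<Longrightarrow> SNC (sstc 0 (liftME 0 E) c)) \<Longrightarrow> TMu \<rho> c \<in> R \<rho>"
  by (auto intro!: RI lemB K_SNE)

lemma adq_mu: "sstc 0 (liftME 0 E) (psc (\<lambda>i. liftM 0 (\<sigma> i)) (upg g) (upE \<tau>) c)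
  = psc (\<lambda>i. liftM 0 (\<sigma> i)) (upg g) (\<lambda>b. case b of 0 \<Rightarrow> liftME 0 E | Suc j \<Rightarrow> liftME 0 (\<tau> j)) c"
  unfolding sst_ps_c ps_ps_c
  apply (rule psc_cong)
    apply (rule ext) apply (simp add: ps_sfM_liftM)
   apply (simp add: id_def)
  apply (rule ext) subgoal for b by (cases b) (simp_all add: psE_sfM_liftME)
  done

definition gm :: "nat \<Rightarrow> nat" where "gm b = (case b of 0 \<Rightarrow> 0 | Suc j \<Rightarrow> j)"

lemma gm_shg0: "(\<lambda>i. gm (shg 0 i)) = (\<lambda>x. x)"
  by (rule ext) (simp add: gm_def shg_def)

lemma adq_ren: "psc TVar gm hole (psc (\<lambda>i. liftM 0 (\<sigma> i)) (upg g) (\<lambda>b. case b of 0 \<Rightarrow> liftME 0 E | Suc j \<Rightarrow> liftME 0 (\<tau> j)) c)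
  = psc \<sigma> (\<lambda>b. gm (upg g b)) (\<lambda>b. case b of 0 \<Rightarrow> E | Suc j \<Rightarrow> \<tau> j) c"
  unfolding ps_ps_c
  apply (rule psc_cong)
    apply (rule ext) apply (simp add: ps_liftM gm_shg0)
   apply simp
  apply (rule ext) subgoal for b by (cases b) (simp_all add: psE_liftME gm_shg0)
  done

lemma adequacy: "hastype \<Gamma> \<Delta> t \<rho> \<Longrightarrow> (\<forall>i<length \<Gamma>. \<sigma> i \<in> R (\<Gamma>!i)) \<Longrightarrow> (\<forall>b<length \<Delta>. \<tau> b \<in> K (\<Delta>!b)) \<Longrightarrow> ps \<sigma> g \<tau> t \<in> R \<rho>"
  and adequacy_c: "hastypec \<Gamma> \<Delta> c \<Longrightarrow> (\<forall>i<length \<Gamma>. \<sigma> i \<in> R (\<Gamma>!i)) \<Longrightarrow> (\<forall>b<length \<Delta>. \<tau> b \<in> K (\<Delta>!b)) \<Longrightarrow> SNC (psc \<sigma> g \<tau> c)"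
proof (induction arbitrary: \<sigma> g \<tau> and \<sigma> g \<tau> rule: hastype_hastypec.inducts)
  case (t_var x \<Gamma> \<rho> \<Delta>) then show ?case by auto
next
  case (t_lam \<sigma>0 \<Gamma> \<Delta> t \<tau>0)
  show ?case
  proof (simp, rule lam_R)
    fix s assume s: "s \<in> R \<sigma>0"
    have "(\<forall>i<length (\<sigma>0 # \<Gamma>). (case i of 0 \<Rightarrow> s | Suc j \<Rightarrow> \<sigma> j) \<in> R ((\<sigma>0 # \<Gamma>) ! i))"
      using s t_lam.prems(1) by (auto split: nat.split)
    from t_lam.IH[OF this t_lam.prems(2)]
    show "substL (ps (upL \<sigma>) g (\<lambda>b. liftLE 0 (\<tau> b)) t) 0 s \<in> R \<tau>0" by (simp add: sub_beta1)
  qed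
next
  case (t_app \<Gamma> \<Delta> t \<sigma>0 \<tau>0 s)
  then show ?case using app_R[OF t_app.IH(1)[OF t_app.prems] t_app.IH(2)[OF t_app.prems]] by simp
next
  case (t_zero \<Gamma> \<Delta>)
  then show ?case using numeral_R[of 0] by simp
next
  case (t_suc \<Gamma> \<Delta> t)
  then show ?case using succ_R[OF t_suc.IH[OF t_suc.prems]] by simp
next
  case (t_nrec \<Gamma> \<Delta> r \<rho> s t)
  then show ?case using nrec_R[OF t_nrec.IH(1)[OF t_nrec.prems] t_nrec.IH(2)[OF t_nrec.prems] t_nrec.IH(3)[OF t_nrec.prems]] by simp
next
  case (t_act \<Gamma> \<rho> \<Delta> c)
  show ?case
  proof (simp, rule mu_R)
    fix E assume E: "E \<in> K \<rho>"
    have "\<forall>b<length (\<rho> # \<Delta>). (case b of 0 \<Rightarrow> E | Suc j \<Rightarrow> \<tau> j) \<in> K ((\<rho> # \<Delta>) ! b)"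
      using E t_act.prems(2) by (auto split: nat.split)
    from t_act.IH[OF t_act.prems(1) this, of "\<lambda>b. gm (upg g b)"]
    have "SNC (psc TVar gm hole (sstc 0 (liftME 0 E) (psc (\<lambda>i. liftM 0 (\<sigma> i)) (upg g) (upE \<tau>) c)))"
      by (simp add: adq_mu adq_ren)
    then show "SNC (sstc 0 (liftME 0 E) (psc (\<lambda>i. liftM 0 (\<sigma> i)) (upg g) (upE \<tau>) c))"
      by (rule SNC_psc)
  qed
next
  case (t_pass \<Gamma> \<Delta> t \<rho> \<alpha>)
  have "ps \<sigma> g \<tau> t \<in> R \<rho>" using t_pass by blast
  moreover have "\<tau> \<alpha> \<in> K \<rho>" using t_pass by auto
  ultimately have "SNA (fill (\<tau> \<alpha>) (ps \<sigma> g \<tau> t))" by (rule RD)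
  then show ?case by (simp add: SNC_Pass)
qed

theorem mainTheorem14:
  assumes "hastype \<Gamma> \<Delta> t \<rho>"
  shows "SNA t"
proof -
  have "ps TVar id hole t \<in> R \<rho>"
    using adequacy[OF assms, where \<sigma>=TVar and g=id and \<tau>=hole] by (simp add: var_R Hole_K)
  then show ?thesis by (simp add: R_SN)
qed



end
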